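(* For all $\alpha,\beta\in\mathbb{R}$ and all $f\in C_0^\infty((0,\infty))$ (complex-valued), with $\mathbf C_{\alpha,\beta}=\frac{(\beta-3)(2\alpha-\beta+1)}{4}$, \[ \mathbf C_{\alpha,\beta}^2\left\|\frac{f}{r^2}\right\|_{L^2_\beta}^2\le\left\|\mathfrak L_\alpha f\right\|_{L^2_\beta}^2 . \]
   Context: For $\beta\in\mathbb{R}$, $L^2_\beta$ denotes the weighted space on $(0,\infty)$ with norm $\|g\|_{L^2_\beta}^2=\int_0^\infty |g(r)|^2 r^\beta\,dr$. For $\alpha\in\mathbb{R}$, $\mathfrak L_\alpha$ is the operator $\mathfrak L_\alpha f(r)=f''(r)+\frac{\alpha}{r}f'(r)$. Expressions such as $f/r^2$ denote the function $r\mapsto f(r)/r^2$. *)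

theory Defs
  imports "HOL-Analysis.Analysis"
begin

definition vderiv :: "nat \<Rightarrow> (real \<Rightarrow> complex) \<Rightarrow> real \<Rightarrow> complex" where
  "vderiv n f = ((\<lambda>g x. vector_derivative g (at x)) ^^ n) f"

definition C0_inf_pos :: "(real \<Rightarrow> complex) \<Rightarrow> bool" where
  "C0_inf_pos f \<longleftrightarrow>
     (\<forall>n. \<forall>r>0. (vderiv n f has_vector_derivative vderiv (Suc n) f r) (at r)) \<and>
     (\<exists>a b. 0 < a \<and> a < b \<and> (\<forall>r. r \<notin> {a..b} \<longrightarrow> f r = 0))"

definition L2w_sq :: "real \<Rightarrow> (real \<Rightarrow> complex) \<Rightarrow> real" where
  "L2w_sq \<beta> g = integral {0<..} (\<lambda>r. (cmod (g r))\<^sup>2 * r powr \<beta>)"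

definition Lop :: "real \<Rightarrow> (real \<Rightarrow> complex) \<Rightarrow> real \<Rightarrow> complex" where
  "Lop \<alpha> f r = vderiv 2 f r + (\<alpha> / r) *\<^sub>R vderiv 1 f r"

definition Cab :: "real \<Rightarrow> real \<Rightarrow> real" where
  "Cab \<alpha> \<beta> = (\<beta> - 3) * (2 * \<alpha> - \<beta> + 1) / 4"

end

theory Submission imports Defs begin

lemma ident:
  fixes r p x0 x1 x2 a b :: real
  assumes "r > 0"
  shows "(x2 + (b - a + 1) / r * x1)\<^sup>2 * (r^3 * p^2) - (a*b)\<^sup>2 * (x0\<^sup>2 * (p^2 / r))
   - (2*(a+b)*(p*(r*x1 - a*x0))*(p*(-a*(r*x1 - a*x0)/r + x1 + r*x2 - a*x1))
      + 2*a*b*((p*(x1 - a*x0/r))*(p*(r*x1 - a*x0)) + (p*x0)*(p*(-a*(r*x1 - a*x0)/r + x1 + r*x2 - a*x1)))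
      + 2*a*b*(a+b)*(p*x0)*(p*(x1 - a*x0/r)))
   = ((p*(r*x1 + r^2*x2 - 2*a*r*x1 + a^2*x0))\<^sup>2 + (a^2+b^2)*(p*(r*x1 - a*x0))\<^sup>2) / r"
  using assms by (simp add: field_simps power2_eq_square) (simp add: algebra_simps power2_eq_square power3_eq_cube)

lemma key_real:
  fixes x x1 x2 :: "real \<Rightarrow> real" and A B \<alpha> \<beta> :: real
  assumes A: "0 < A" "A \<le> B"
    and d0: "\<And>r. r \<in> {A..B} \<Longrightarrow> (x has_real_derivative x1 r) (at r)"
    and d1: "\<And>r. r \<in> {A..B} \<Longrightarrow> (x1 has_real_derivative x2 r) (at r)"
    and c2: "continuous_on {A..B} x2"
    and bd: "x A = 0" "x1 A = 0" "x B = 0" "x1 B = 0"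
  shows "\<exists>I. ((\<lambda>r. (x2 r + \<alpha> / r * x1 r)\<^sup>2 * r powr \<beta>
              - ((\<beta> - 3) * (2 * \<alpha> - \<beta> + 1) / 4)\<^sup>2 * ((x r)\<^sup>2 * r powr (\<beta> - 4))) has_integral I) {A..B} \<and> 0 \<le> I"
proof -
  define a where "a = (3 - \<beta>) / 2"
  define b where "b = a + \<alpha> - 1"
  define p where "p r = r powr (-a)" for r
  define g where "g r = (x2 r + \<alpha> / r * x1 r)\<^sup>2 * r powr \<beta>
              - ((\<beta> - 3) * (2 * \<alpha> - \<beta> + 1) / 4)\<^sup>2 * ((x r)\<^sup>2 * r powr (\<beta> - 4))" for r
  define Psi where "Psi r = (a+b)*((p r*(r*x1 r - a*x r))*(p r*(r*x1 r - a*x r))) + (2*a*b)*((p r * x r)*(p r*(r*x1 r - a*x r)))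
     + (a*b*(a+b))*((p r * x r)*(p r * x r))" for r
  define dH where "dH r = p r*(x1 r - a*x r/r)" for r
  define dH1 where "dH1 r = p r*(-a*(r*x1 r - a*x r)/r + x1 r + r*x2 r - a*x1 r)" for r
  define Psi' where "Psi' r = 2*(a+b)*(p r*(r*x1 r - a*x r))*dH1 r
      + 2*a*b*(dH r*(p r*(r*x1 r - a*x r)) + (p r*x r)*dH1 r)
      + 2*a*b*(a+b)*(p r*x r)*dH r" for r
  define N where "N r = ((p r*(r*x1 r + r^2*x2 r - 2*a*r*x1 r + a^2*x r))\<^sup>2 + (a^2+b^2)*(p r*(r*x1 r - a*x r))\<^sup>2) / r" for r
  have dP: "(p has_real_derivative (-a * p r / r)) (at r)" if "r > 0" for r
  proof -
    have "(p has_real_derivative (-a) * r powr (-a - 1)) (at r)"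
      unfolding p_def[abs_def] using has_real_derivative_powr[OF that, of "-a"] by simp
    moreover have "r powr (-a - 1) = p r / r" using that by (simp add: p_def powr_diff)
    ultimately show ?thesis by simp
  qed
  have dPsi: "(Psi has_real_derivative Psi' r) (at r)" if r: "r \<in> {A..B}" for r
  proof -
    have r0: "r > 0" using r A by auto
    have hH: "((\<lambda>r. p r * x r) has_real_derivative dH r) (at r)"
      by (rule DERIV_cong[OF DERIV_mult[OF dP[OF r0] d0[OF r]]]) (use r0 in \<open>simp add: dH_def field_simps\<close>)
    have hK: "((\<lambda>r. r*x1 r - a*x r) has_real_derivative (x1 r + r * x2 r - a * x1 r)) (at r)"
      by (rule DERIV_cong[OF DERIV_diff[OF DERIV_mult[OF DERIV_ident d1[OF r]] DERIV_cmult[OF d0[OF r]]]]) simp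
    have hH1: "((\<lambda>r. p r*(r*x1 r - a*x r)) has_real_derivative dH1 r) (at r)"
      by (rule DERIV_cong[OF DERIV_mult[OF dP[OF r0] hK]]) (use r0 in \<open>simp add: dH1_def field_simps\<close>)
    show ?thesis unfolding Psi_def[abs_def]
      by (rule DERIV_cong[OF DERIV_add[OF DERIV_add[OF DERIV_cmult[OF DERIV_mult[OF hH1 hH1]] DERIV_cmult[OF DERIV_mult[OF hH hH1]]] DERIV_cmult[OF DERIV_mult[OF hH hH]]]])
         (simp add: Psi'_def algebra_simps)
  qed
  have ptw: "g r - Psi' r = N r" if r: "r \<in> {A..B}" for r
  proof -
    have r0: "r > 0" using r A by auto
    have e1: "r powr \<beta> = r^3 * (p r)^2"
    proof -
      have "(p r)^2 = r powr (\<beta> - 3)" using r0 by (simp add: p_def power2_eq_square powr_add[symmetric] a_def)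
      moreover have "r powr \<beta> = r powr (\<beta> - 3) * r powr 3" using r0 by (subst powr_add[symmetric]) simp
      ultimately show ?thesis using r0 by (simp add: powr_realpow)
    qed
    have e2: "r powr (\<beta> - 4) = (p r)^2 / r"
    proof -
      have "(p r)^2 = r powr (\<beta> - 3)" using r0 by (simp add: p_def power2_eq_square powr_add[symmetric] a_def)
      moreover have "r powr (\<beta> - 3) = r powr (\<beta> - 4) * r powr 1" using r0 by (subst powr_add[symmetric]) simp
      ultimately show ?thesis using r0 by simp
    qed
    have e3: "((\<beta> - 3) * (2 * \<alpha> - \<beta> + 1) / 4)\<^sup>2 = (a*b)\<^sup>2"
      by (simp add: a_def b_def power2_eq_square field_simps) 
    have e4: "\<alpha> = b - a + 1" by (simp add: b_def)
    show ?thesis unfolding g_def Psi'_def N_def dH_def dH1_def e1 e2 e3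
      using ident[OF r0, of "x2 r" b a "x1 r" "p r" "x r"] e4 by simp
  qed
  have cont: "continuous_on {A..B} g"
  proof -
    have cx: "continuous_on {A..B} x" using d0
      by (meson DERIV_isCont continuous_at_imp_continuous_on)
    have cx1: "continuous_on {A..B} x1" using d1
      by (meson DERIV_isCont continuous_at_imp_continuous_on)
    show ?thesis unfolding g_def using A
      by (auto intro!: continuous_intros cx cx1 c2)
  qed
  then obtain I where gI: "(g has_integral I) {A..B}"
    using integrable_continuous_interval by blast
  have "(Psi' has_integral (Psi B - Psi A)) {A..B}"
    using fundamental_theorem_of_calculus[OF A(2)] dPsi
    by (meson has_real_derivative_iff_has_vector_derivative has_vector_derivative_at_within)
  then have PI: "(Psi' has_integral 0) {A..B}" by (simp add: Psi_def bd)
  have "((\<lambda>r. g r - Psi' r) has_integral I - 0) {A..B}"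
    using has_integral_diff[OF gI PI] .
  then have "(N has_integral I) {A..B}"
    using has_integral_cong[of "{A..B}" "\<lambda>r. g r - Psi' r" N I] ptw by simp
  moreover have "0 \<le> N r" if "r \<in> {A..B}" for r using that A by (simp add: N_def)
  ultimately have "0 \<le> I" using has_integral_nonneg by blast
  then show ?thesis using gI unfolding g_def by blast
qed

lemma Re_vd:
  assumes "(g has_vector_derivative g') (at r)"
  shows "((\<lambda>r. Re (g r)) has_real_derivative Re g') (at r)"
proof -
  have "((\<lambda>r. Re (g r)) has_derivative (\<lambda>x. Re (x *\<^sub>R g'))) (at r)"
    using bounded_linear.has_derivative[OF bounded_linear_Re] assms
    unfolding has_vector_derivative_def by blast
  moreover have "(\<lambda>x. Re (x *\<^sub>R g')) = (*) (Re g')" by (auto simp: fun_eq_iff)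
  ultimately show ?thesis unfolding has_field_derivative_def by simp
qed

lemma Im_vd:
  assumes "(g has_vector_derivative g') (at r)"
  shows "((\<lambda>r. Im (g r)) has_real_derivative Im g') (at r)"
proof -
  have "((\<lambda>r. Im (g r)) has_derivative (\<lambda>x. Im (x *\<^sub>R g'))) (at r)"
    using bounded_linear.has_derivative[OF bounded_linear_Im] assms
    unfolding has_vector_derivative_def by blast
  moreover have "(\<lambda>x. Im (x *\<^sub>R g')) = (*) (Im g')" by (auto simp: fun_eq_iff)
  ultimately show ?thesis unfolding has_field_derivative_def by simp
qed

lemma zero_vd:
  fixes g :: "real \<Rightarrow> complex"
  assumes "(g has_vector_derivative g') (at r)" "open S" "r \<in> S" "\<And>y. y \<in> S \<Longrightarrow> g y = 0"
  shows "g' = 0"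
proof -
  have "((\<lambda>_. 0) has_vector_derivative g') (at r)"
    using has_vector_derivative_transform_within_open[OF assms(1,2,3), of "\<lambda>_. 0"] assms(4) by simp
  moreover have "((\<lambda>_. 0::complex) has_vector_derivative 0) (at r)" by (rule has_vector_derivative_const)
  ultimately show ?thesis using vector_derivative_unique_at by blast
qed

lemma transfer_int:
  fixes h :: "real \<Rightarrow> real"
  assumes "(h has_integral I) {A..B}" "0 < A" "\<And>r. r > 0 \<Longrightarrow> r \<notin> {A..B} \<Longrightarrow> h r = 0"
  shows "integral {0<..} h = I"
proof -
  define h' where "h' r = (if 0 < r then h r else 0)" for r
  have "(h' has_integral I) {A..B}"
    using has_integral_cong[of "{A..B}" h h' I] assms(1,2) by (simp add: h'_def)
  then have "(h' has_integral I) {0<..}"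
    by (rule has_integral_on_superset) (use assms in \<open>auto simp: h'_def\<close>)
  then have "(h has_integral I) {0<..}"
    using has_integral_cong[of "{0<..}" h h' I] by (simp add: h'_def)
  then show ?thesis by (rule integral_unique)
qed

theorem theorem1p3:
  fixes \<alpha> \<beta> :: real and f :: "real \<Rightarrow> complex"
  assumes "C0_inf_pos f"
  shows "(Cab \<alpha> \<beta>)\<^sup>2 * L2w_sq \<beta> (\<lambda>r. f r / of_real (r\<^sup>2)) \<le> L2w_sq \<beta> (Lop \<alpha> f)"
proof -
  define f1 where "f1 = vderiv 1 f"
  define f2 where "f2 = vderiv 2 f"
  define f3 where "f3 = vderiv 3 f"
  from assms obtain a0 b0 where ab: "0 < a0" "a0 < b0" and supp: "\<And>r. r \<notin> {a0..b0} \<Longrightarrow> f r = 0"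
    unfolding C0_inf_pos_def by blast
  have der: "\<And>n r. r > 0 \<Longrightarrow> (vderiv n f has_vector_derivative vderiv (Suc n) f r) (at r)"
    using assms unfolding C0_inf_pos_def by blast
  have v0: "vderiv 0 f = f" by (simp add: vderiv_def)
  have vd0: "(f has_vector_derivative f1 r) (at r)" if "r > 0" for r
    using der[OF that, of 0] by (simp add: v0 f1_def)
  have vd1: "(f1 has_vector_derivative f2 r) (at r)" if "r > 0" for r
    using der[OF that, of 1] by (simp add: f1_def f2_def numeral_2_eq_2)
  have vd2: "(f2 has_vector_derivative f3 r) (at r)" if "r > 0" for r
    using der[OF that, of 2] by (simp add: f2_def f3_def numeral_3_eq_3 numeral_2_eq_2)
  define S where "S = {0<..<a0} \<union> {b0<..}"
  have oS: "open S" by (simp add: S_def open_Un)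
  have inS: "r \<in> S" if "r > 0" "r \<notin> {a0..b0}" for r using that by (auto simp: S_def)
  have Spos: "y > 0" if "y \<in> S" for y using that ab by (auto simp: S_def)
  have Sout: "y \<notin> {a0..b0}" if "y \<in> S" for y using that by (auto simp: S_def)
  have z0: "f r = 0" if "r > 0" "r \<notin> {a0..b0}" for r using supp that by blast
  have z1: "f1 r = 0" if "r > 0" "r \<notin> {a0..b0}" for r
    by (rule zero_vd[OF vd0[OF that(1)] oS inS[OF that]]) (use supp Sout in blast)
  have z2: "f2 r = 0" if "r > 0" "r \<notin> {a0..b0}" for r
    by (rule zero_vd[OF vd1[OF that(1)] oS inS[OF that]]) (use z1 Sout Spos in blast)
  define A where "A = a0 / 2"
  define B where "B = 2 * b0"
  have A0: "0 < A" and AB: "A \<le> B" using ab by (auto simp: A_def B_def)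
  have Aout: "A \<notin> {a0..b0}" "B \<notin> {a0..b0}" using ab by (auto simp: A_def B_def)
  have pos: "r > 0" if "r \<in> {A..B}" for r using that A0 by auto
  have B0: "B > 0" using A0 AB by auto
  have cRe2: "continuous_on {A..B} (\<lambda>r. Re (f2 r))"
    by (rule continuous_at_imp_continuous_on) (auto intro!: DERIV_isCont[OF Re_vd[OF vd2]] pos)
  have cIm2: "continuous_on {A..B} (\<lambda>r. Im (f2 r))"
    by (rule continuous_at_imp_continuous_on) (auto intro!: DERIV_isCont[OF Im_vd[OF vd2]] pos)
  obtain IRe where IRe: "((\<lambda>r. (Re (f2 r) + \<alpha> / r * Re (f1 r))\<^sup>2 * r powr \<beta>
              - ((\<beta> - 3) * (2 * \<alpha> - \<beta> + 1) / 4)\<^sup>2 * ((Re (f r))\<^sup>2 * r powr (\<beta> - 4))) has_integral IRe) {A..B}"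
     "0 \<le> IRe"
    using key_real[OF A0 AB, of "\<lambda>r. Re (f r)" "\<lambda>r. Re (f1 r)" "\<lambda>r. Re (f2 r)" \<alpha> \<beta>]
      Re_vd[OF vd0] Re_vd[OF vd1] pos cRe2 z0[OF A0 Aout(1)] z0[OF B0 Aout(2)]
      z1[OF A0 Aout(1)] z1[OF B0 Aout(2)] by auto
  obtain IIm where IIm: "((\<lambda>r. (Im (f2 r) + \<alpha> / r * Im (f1 r))\<^sup>2 * r powr \<beta>
              - ((\<beta> - 3) * (2 * \<alpha> - \<beta> + 1) / 4)\<^sup>2 * ((Im (f r))\<^sup>2 * r powr (\<beta> - 4))) has_integral IIm) {A..B}"
     "0 \<le> IIm"
    using key_real[OF A0 AB, of "\<lambda>r. Im (f r)" "\<lambda>r. Im (f1 r)" "\<lambda>r. Im (f2 r)" \<alpha> \<beta>]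
      Im_vd[OF vd0] Im_vd[OF vd1] pos cIm2 z0[OF A0 Aout(1)] z0[OF B0 Aout(2)]
      z1[OF A0 Aout(1)] z1[OF B0 Aout(2)] by auto
  define Qr where "Qr r = ((Re (f r))\<^sup>2 + (Im (f r))\<^sup>2) * r powr (\<beta> - 4)" for r
  have cQr: "continuous_on {A..B} Qr"
  proof -
    have c1: "continuous_on {A..B} (\<lambda>r. Re (f r))"
      by (rule continuous_at_imp_continuous_on) (auto intro!: DERIV_isCont[OF Re_vd[OF vd0]] pos simp: A0)
    have c2: "continuous_on {A..B} (\<lambda>r. Im (f r))"
      by (rule continuous_at_imp_continuous_on) (auto intro!: DERIV_isCont[OF Im_vd[OF vd0]] pos simp: A0)
    show ?thesis unfolding Qr_def using pos A0 AB
      by (auto intro!: continuous_intros c1 c2 simp: not_le[symmetric])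
  qed
  then obtain IQ where IQ: "(Qr has_integral IQ) {A..B}"
    using integrable_continuous_interval by blast
  define Q where "Q r = (cmod (f r / of_real (r\<^sup>2)))\<^sup>2 * r powr \<beta>" for r
  define P where "P r = (cmod (Lop \<alpha> f r))\<^sup>2 * r powr \<beta>" for r
  have QQr: "Q r = Qr r" if "r > 0" for r
  proof -
    have e1: "(cmod (f r / of_real (r\<^sup>2)))\<^sup>2 = ((Re (f r))\<^sup>2 + (Im (f r))\<^sup>2) / r^4"
      using that by (simp add: norm_divide power_divide cmod_power2 flip: power_mult)
    have e2: "r powr \<beta> / r^4 = r powr (\<beta> - 4)"
      using that by (simp add: powr_diff powr_realpow)
    have "Q r = ((Re (f r))\<^sup>2 + (Im (f r))\<^sup>2) * (r powr \<beta> / r^4)"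
      unfolding Q_def e1 by simp
    then show ?thesis unfolding Qr_def e2 .
  qed
  have PP: "P r = ((Re (f2 r) + \<alpha> / r * Re (f1 r))\<^sup>2 * r powr \<beta>
              - ((\<beta> - 3) * (2 * \<alpha> - \<beta> + 1) / 4)\<^sup>2 * ((Re (f r))\<^sup>2 * r powr (\<beta> - 4)))
      + ((Im (f2 r) + \<alpha> / r * Im (f1 r))\<^sup>2 * r powr \<beta>
              - ((\<beta> - 3) * (2 * \<alpha> - \<beta> + 1) / 4)\<^sup>2 * ((Im (f r))\<^sup>2 * r powr (\<beta> - 4)))
      + ((\<beta> - 3) * (2 * \<alpha> - \<beta> + 1) / 4)\<^sup>2 * Qr r" for r
    unfolding P_def Qr_def Lop_def f1_def f2_def cmod_power2 by (simp add: algebra_simps)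
  have IQ': "(Q has_integral IQ) {A..B}"
    using has_integral_cong[of "{A..B}" Q Qr IQ] IQ QQr pos by simp
  have "(P has_integral (IRe + IIm + ((\<beta> - 3) * (2 * \<alpha> - \<beta> + 1) / 4)\<^sup>2 * IQ)) {A..B}"
    unfolding PP[abs_def]
    by (intro has_integral_add IRe(1) IIm(1) has_integral_mult_right IQ)
  then have intP: "integral {0<..} P = IRe + IIm + ((\<beta> - 3) * (2 * \<alpha> - \<beta> + 1) / 4)\<^sup>2 * IQ"
    by (rule transfer_int[OF _ A0])
       (use z0 z1 z2 ab in \<open>auto simp: P_def Lop_def f1_def f2_def A_def B_def\<close>)
  have intQ: "integral {0<..} Q = IQ"
    by (rule transfer_int[OF IQ' A0])
       (use z0 ab in \<open>auto simp: Q_def A_def B_def\<close>)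
  show ?thesis
    unfolding L2w_sq_def Cab_def
    using intP intQ IRe(2) IIm(2) unfolding P_def[abs_def] Q_def[abs_def] by simp
qed

end
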